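(* $H\mathfrak P'=H\mathcal P=\mathcal P\setminus\{(1,0,1)\}$, where for a set $X$ of matrices and a set $Y$ of triples, $XY=\{M(x,y,z)^t:M\in X,\ (x,y,z)\in Y\}$.
   Context: Let $\mathfrak P=\{(x,y,z)\in\mathbb Z_{>0}^3: 2\mid y,\ \gcd(x,y,z)=1,\ x^2+y^2=z^2\}$ (primitive Pythagorean triples), $\mathfrak P'=\mathfrak P\cup\{(1,0,1)\}$, and $\mathcal P=\{(x,y,z)\in\mathfrak P:\min\{x,y\}<z/2\}\cup\{(1,0,1)\}$. Let $A=\begin{pmatrix}1&-2&2\\2&-1&2\\2&-2&3\end{pmatrix}$, $B=\begin{pmatrix}1&2&2\\2&1&2\\2&2&3\end{pmatrix}$, $C=\begin{pmatrix}-1&2&2\\-2&1&2\\-2&2&3\end{pmatrix}$, and let $G$ be the monoid generated by $I_3,A,B,C$ under matrix multiplication, acting on triples as column vectors. Let $H$ be the set of all matrices of the forms $A^2NB$, $A^kB$, $ABNB$, $C^2NB$, $C^kB$, $CBNB$, $(AC)^kA^2NB$, $(AC)^kABNB$, $(AC)^kAB$, $(CA)^kC^2NB$, $(CA)^kCBNB$, $(CA)^kCB$, with $N\in G$ and $k\in\mathbb Z_{>0}$. *)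

theory Defs
  imports "HOL-Analysis.Analysis"
begin

type_synonym mat3 = "int^3^3"
type_synonym trip = "int^3"

definition trip :: "int \<Rightarrow> int \<Rightarrow> int \<Rightarrow> trip" where
  "trip x y z = vector [x, y, z]"

definition PPT :: "trip set" where
  "PPT = {trip x y z | x y z. x > 0 \<and> y > 0 \<and> z > 0 \<and> even y \<and>
           gcd x (gcd y z) = 1 \<and> x^2 + y^2 = z^2}"

definition PPT' :: "trip set" where
  "PPT' = PPT \<union> {trip 1 0 1}"

text \<open>min(x,y) < z/2, written as 2 * min x y < z over the integers.\<close>
definition PPTsmall :: "trip set" where
  "PPTsmall = {trip x y z | x y z. trip x y z \<in> PPT \<and> 2 * min x y < z} \<union> {trip 1 0 1}"

definition matA :: mat3 where
  "matA = vector [vector [1, -2, 2], vector [2, -1, 2], vector [2, -2, 3]]"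
definition matB :: mat3 where
  "matB = vector [vector [1, 2, 2], vector [2, 1, 2], vector [2, 2, 3]]"
definition matC :: mat3 where
  "matC = vector [vector [-1, 2, 2], vector [-2, 1, 2], vector [-2, 2, 3]]"

inductive_set monG :: "mat3 set" where
  idG: "mat 1 \<in> monG"
| AG: "N \<in> monG \<Longrightarrow> N ** matA \<in> monG"
| BG: "N \<in> monG \<Longrightarrow> N ** matB \<in> monG"
| CG: "N \<in> monG \<Longrightarrow> N ** matC \<in> monG"

primrec mpow :: "mat3 \<Rightarrow> nat \<Rightarrow> mat3" where
  "mpow M 0 = mat 1"
| "mpow M (Suc k) = M ** mpow M k"

definition setH :: "mat3 set" where
  "setH = {M. \<exists>N \<in> monG. \<exists>k::nat. k > 0 \<and>
     (M = matA ** matA ** N ** matB \<or>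
      M = mpow matA k ** matB \<or>
      M = matA ** matB ** N ** matB \<or>
      M = matC ** matC ** N ** matB \<or>
      M = mpow matC k ** matB \<or>
      M = matC ** matB ** N ** matB \<or>
      M = mpow (matA ** matC) k ** matA ** matA ** N ** matB \<or>
      M = mpow (matA ** matC) k ** matA ** matB ** N ** matB \<or>
      M = mpow (matA ** matC) k ** matA ** matB \<or>
      M = mpow (matC ** matA) k ** matC ** matC ** N ** matB \<or>
      M = mpow (matC ** matA) k ** matC ** matB ** N ** matB \<or>
      M = mpow (matC ** matA) k ** matC ** matB)}"

definition act_set :: "mat3 set \<Rightarrow> trip set \<Rightarrow> trip set" where
  "act_set X Y = {M *v v | M v. M \<in> X \<and> v \<in> Y}"

end

theory Submission
  imports Defs
begin


lemma trip_eq: "trip a b c = trip a' b' c' \<longleftrightarrow> a = a' \<and> b = b' \<and> c = c'"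
  unfolding trip_def by (auto simp: vec_eq_iff forall_3)

lemma trip_nth [simp]: "trip a b c $ 1 = a" "trip a b c $ 2 = b" "trip a b c $ 3 = c"
  unfolding trip_def by simp_all

lemma trip_ex: "v = trip (v$1) (v$2) (v$3)"
  unfolding trip_def by (auto simp: vec_eq_iff forall_3)

lemma mv3: "(vector [vector [a,b,c], vector[d,e,f], vector[g,h,i]] :: int^3^3) *v trip x y z
   = trip (a*x+b*y+c*z) (d*x+e*y+f*z) (g*x+h*y+i*z)"
  unfolding trip_def by (simp add: vec_eq_iff forall_3 matrix_vector_mult_def sum_3)

lemma Av: "matA *v trip x y z = trip (x-2*y+2*z) (2*x-y+2*z) (2*x-2*y+3*z)"
  unfolding matA_def mv3 by simp
lemma Bv: "matB *v trip x y z = trip (x+2*y+2*z) (2*x+y+2*z) (2*x+2*y+3*z)"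
  unfolding matB_def mv3 by simp
lemma Cv: "matC *v trip x y z = trip (-x+2*y+2*z) (-2*x+y+2*z) (-2*x+2*y+3*z)"
  unfolding matC_def mv3 by simp



abbreviation e3 :: trip where "e3 \<equiv> trip 1 0 1"

lemma PPT_iff: "trip x y z \<in> PPT \<longleftrightarrow> x > 0 \<and> y > 0 \<and> z > 0 \<and> even y \<and>
           gcd x (gcd y z) = 1 \<and> x^2 + y^2 = z^2"
  unfolding PPT_def by (auto simp: trip_eq)

lemma e3_notin: "e3 \<notin> PPT" by (simp add: PPT_iff)

lemma PPT'_iff: "trip x y z \<in> PPT' \<longleftrightarrow> trip x y z \<in> PPT \<or> (x = 1 \<and> y = 0 \<and> z = 1)"
  unfolding PPT'_def by (auto simp: trip_eq)

lemma gcd_tr: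
  fixes x y z x' y' z' :: int
  assumes "gcd x (gcd y z) = 1"
    and "x = ka*x'+kb*y'+kc*z'" "y = kd*x'+ke*y'+kf*z'" "z = kg*x'+kh*y'+ki*z'"
  shows "gcd x' (gcd y' z') = 1"
proof -
  define g where "g = gcd x' (gcd y' z')"
  have d: "g dvd x'" "g dvd y'" "g dvd z'" unfolding g_def
    using gcd_dvd1 gcd_dvd2 dvd_trans by blast+
  have "g dvd x" "g dvd y" "g dvd z" using d assms(2-4) by auto
  hence "g dvd gcd x (gcd y z)" by auto
  hence "g dvd 1" using assms(1) by simp
  moreover have "g \<ge> 0" unfolding g_def by simp
  ultimately show ?thesis unfolding g_def by simp
qed

lemma sq_less: "(a::int) \<ge> 0 \<Longrightarrow> b > 0 \<Longrightarrow> a^2 < b^2 \<Longrightarrow> a < b"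
  using power_less_imp_less_base[of a 2 b] by simp

lemma PPT_bounds: assumes "trip x y z \<in> PPT"
  shows "x < z" "y < z" "z < x + y" "2*x+2*y < 3*z" "odd x"
proof -
  have p: "x>0" "y>0" "z>0" "x^2+y^2=z^2" "even y" "gcd x (gcd y z) = 1"
    using assms by (auto simp: PPT_iff)
  have xx: "x*x > 0" "y*y > 0" "x*y > 0" using p by auto
  have eq: "x*x+y*y = z*z" using p(4) by (simp add: power2_eq_square)
  have "x^2 < z^2" using xx eq by (simp add: power2_eq_square)
  thus "x < z" using p sq_less[of x z] by simp
  have "y^2 < z^2" using xx eq by (simp add: power2_eq_square)
  thus "y < z" using p sq_less[of y z] by simp
  have "(x+y)^2 = z*z + 2*(x*y)" using eq by (simp add: power2_eq_square algebra_simps)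
  hence "z^2 < (x+y)^2" using xx by (simp add: power2_eq_square)
  thus "z < x + y" using p sq_less[of z "x+y"] by simp
  have h1: "(x-y)*(x-y) \<ge> 0" by simp
  have h2: "(x-y)*(x-y) = x*x+y*y - 2*(x*y)" by (simp add: algebra_simps)
  have h3: "(2*x+2*y)^2 = 4*(x*x+y*y) + 8*(x*y)" by (simp add: power2_eq_square algebra_simps)
  have h4: "(3*z)^2 = 9*(z*z)" by (simp add: power2_eq_square algebra_simps)
  have h5: "z*z > 0" using p by simp
  have h6: "2*(x*y) \<le> z*z" using h1 h2 eq by linarith
  have "(2*x+2*y)^2 < (3*z)^2" unfolding h3 h4 eq using h5 h6 by linarith
  thus "2*x+2*y < 3*z" using p sq_less[of "2*x+2*y" "3*z"] by simp
  show "odd x"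
  proof
    assume ex: "even x"
    hence "even (x^2+y^2)" using p(5) by simp
    hence "even (z^2)" using p(4) by simp
    hence "even z" by simp
    hence "2 dvd gcd x (gcd y z)" using ex p(5) by (intro gcd_greatest) auto
    thus False using p(6) by simp
  qed
qed

lemma toPPT': assumes "(a::int) > 0" "b \<ge> 0" "r > 0" "even b" "gcd a (gcd b r) = 1" "a^2+b^2 = r^2"
  shows "trip a b r \<in> PPT'"
proof (cases "b = 0")
  case True
  hence "a^2 = r^2" using assms by simp
  hence "a = r" using assms by (metis abs_of_pos power2_eq_iff_nonneg less_imp_le)
  hence "a = 1" using assms True by simp
  thus ?thesis using True \<open>a = r\<close> by (simp add: PPT'_iff)
next
  case False
  thus ?thesis using assms by (simp add: PPT'_iff PPT_iff)
qed

lemma PPT'_bounds: "trip x y z \<in> PPT' \<Longrightarrow> x > 0 \<and> y \<ge> 0 \<and> z > 0 \<and> x^2+y^2=z^2"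
  by (auto simp: PPT'_iff PPT_iff)

lemma e_PPT': "e3 \<in> PPT'" by (simp add: PPT'_iff)
lemma t345: "trip 3 4 5 \<in> PPT" by (simp add: PPT_iff gcd_non_0_int)

lemma Ae: "matA *v e3 = trip 3 4 5" by (simp add: Av)
lemma Be: "matB *v e3 = trip 3 4 5" by (simp add: Bv)
lemma Ce: "matC *v e3 = e3" by (simp add: Cv)




lemma A_PPT0: assumes "trip x y z \<in> PPT" shows "matA *v trip x y z \<in> PPT"
proof -
  have p: "x>0" "y>0" "z>0" "even y" "gcd x (gcd y z) = 1" "x^2+y^2=z^2"
    using assms by (auto simp: PPT_iff)
  have b: "x < z" "y < z" using PPT_bounds[OF assms] by auto
  have g: "gcd (x-2*y+2*z) (gcd (2*x-y+2*z) (2*x-2*y+3*z)) = 1"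
    by (rule gcd_tr[OF p(5), where ka=1 and kb=2 and kc="-2" and kd="-2" and ke="-1" and kf=2
        and kg="-2" and kh="-2" and ki=3]) (simp_all add: algebra_simps)
  have e: "(x-2*y+2*z)^2 + (2*x-y+2*z)^2 = (2*x-2*y+3*z)^2"
    using p(6) by (simp add: power2_eq_square algebra_simps)
  show ?thesis unfolding Av PPT_iff using p b g e by auto
qed

lemma B_PPT0: assumes "trip x y z \<in> PPT" shows "matB *v trip x y z \<in> PPT"
proof -
  have p: "x>0" "y>0" "z>0" "even y" "gcd x (gcd y z) = 1" "x^2+y^2=z^2"
    using assms by (auto simp: PPT_iff)
  have g: "gcd (x+2*y+2*z) (gcd (2*x+y+2*z) (2*x+2*y+3*z)) = 1"
    by (rule gcd_tr[OF p(5), where ka=1 and kb=2 and kc="-2" and kd="2" and ke="1" and kf="-2"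
        and kg="-2" and kh="-2" and ki=3]) (simp_all add: algebra_simps)
  have e: "(x+2*y+2*z)^2 + (2*x+y+2*z)^2 = (2*x+2*y+3*z)^2"
    using p(6) by (simp add: power2_eq_square algebra_simps)
  show ?thesis unfolding Bv PPT_iff using p g e by auto
qed

lemma C_PPT0: assumes "trip x y z \<in> PPT" shows "matC *v trip x y z \<in> PPT"
proof -
  have p: "x>0" "y>0" "z>0" "even y" "gcd x (gcd y z) = 1" "x^2+y^2=z^2"
    using assms by (auto simp: PPT_iff)
  have b: "x < z" "y < z" using PPT_bounds[OF assms] by auto
  have g: "gcd (-x+2*y+2*z) (gcd (-2*x+y+2*z) (-2*x+2*y+3*z)) = 1"
    by (rule gcd_tr[OF p(5), where ka="-1" and kb="-2" and kc="2" and kd="2" and ke="1" and kf="-2"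
        and kg="-2" and kh="-2" and ki=3]) (simp_all add: algebra_simps)
  have e: "(-x+2*y+2*z)^2 + (-2*x+y+2*z)^2 = (-2*x+2*y+3*z)^2"
    using p(6) by (simp add: power2_eq_square algebra_simps)
  show ?thesis unfolding Cv PPT_iff using p b g e by auto
qed

lemma A_PPT: "v \<in> PPT \<Longrightarrow> matA *v v \<in> PPT" by (metis trip_ex A_PPT0)
lemma B_PPT: "v \<in> PPT \<Longrightarrow> matB *v v \<in> PPT" by (metis trip_ex B_PPT0)
lemma C_PPT: "v \<in> PPT \<Longrightarrow> matC *v v \<in> PPT" by (metis trip_ex C_PPT0)

lemma PPT_sub: "PPT \<subseteq> PPT'" unfolding PPT'_def by auto
lemma PPT'_cases: "v \<in> PPT' \<Longrightarrow> v \<in> PPT \<or> v = e3" unfolding PPT'_def by auto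

lemma B_PPT': "v \<in> PPT' \<Longrightarrow> matB *v v \<in> PPT"
  using PPT'_cases B_PPT Be t345 by metis

lemma matmul_1: "mat 1 ** M = M" "M ** mat 1 = M" by simp_all

lemma monG_mul: "N \<in> monG \<Longrightarrow> M \<in> monG \<Longrightarrow> M ** N \<in> monG"
proof (induction N rule: monG.induct)
  case idG thus ?case by simp
next
  case (AG N) thus ?case using monG.AG by (metis matrix_mul_assoc)
next
  case (BG N) thus ?case using monG.BG by (metis matrix_mul_assoc)
next
  case (CG N) thus ?case using monG.CG by (metis matrix_mul_assoc)
qed

lemma A_G: "matA \<in> monG" using monG.AG[OF monG.idG] by simp
lemma B_G: "matB \<in> monG" using monG.BG[OF monG.idG] by simp
lemma C_G: "matC \<in> monG" using monG.CG[OF monG.idG] by simp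

lemma mpow_G: "M \<in> monG \<Longrightarrow> mpow M k \<in> monG"
  by (induction k) (auto intro: monG_mul monG.idG)

lemma mpow_Suc': "mpow M (Suc k) = mpow M k ** M"
  by (induction k) (simp_all add: matrix_mul_assoc)

lemma monG_PPT: "N \<in> monG \<Longrightarrow> v \<in> PPT \<Longrightarrow> N *v v \<in> PPT"
proof (induction N arbitrary: v rule: monG.induct)
  case idG thus ?case by simp
next
  case (AG N) thus ?case using A_PPT by (metis matrix_vector_mul_assoc)
next
  case (BG N) thus ?case using B_PPT by (metis matrix_vector_mul_assoc)
next
  case (CG N) thus ?case using C_PPT by (metis matrix_vector_mul_assoc)
qed



lemma descent0: assumes w: "trip x y z \<in> PPT"
  shows "\<exists>u\<in>PPT'. u$3 < z \<and> (trip x y z = matA *v u \<or> trip x y z = matB *v u \<or> trip x y z = matC *v u)"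
proof -
  have pp: "x>0" "y>0" "z>0" "even y" "gcd x (gcd y z) = 1" "x^2+y^2=z^2"
    using w by (auto simp: PPT_iff)
  note b = PPT_bounds[OF w]
  define p where "p = x+2*y-2*z"
  define q where "q = 2*x+y-2*z"
  define r where "r = 3*z-2*x-2*y"
  have r0: "r > 0" "r < z" using b unfolding r_def by auto
  have podd: "odd p" using b(5) pp(4) unfolding p_def by simp
  hence p0: "p \<noteq> 0" by auto
  have qeven: "even q" using pp(4) unfolding q_def by simp
  have sq: "p^2 + q^2 = r^2" using pp(6) unfolding p_def q_def r_def
    by (simp add: power2_eq_square algebra_simps)
  have eqx: "x*x+y*y = z*z" using pp(6) by (simp add: power2_eq_square)
  have notboth: "\<not> (p < 0 \<and> q < 0)"
  proof
    assume h: "p < 0 \<and> q < 0"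
    have zy: "z+y > 0" "z+x > 0" using pp by auto
    have "x < 2*(z-y)" using h unfolding p_def by simp
    hence "x*(z+y) < 2*(z-y)*(z+y)" using zy by (intro mult_strict_right_mono) auto
    also have "2*(z-y)*(z+y) = x*(2*x)" using eqx by (simp add: algebra_simps)
    finally have "z+y < 2*x" using pp(1) by (simp add: mult_less_cancel_left_pos)
    have "y < 2*(z-x)" using h unfolding q_def by simp
    hence "y*(z+x) < 2*(z-x)*(z+x)" using zy by (intro mult_strict_right_mono) auto
    also have "2*(z-x)*(z+x) = y*(2*y)" using eqx by (simp add: algebra_simps)
    finally have "z+x < 2*y" using pp(2) by (simp add: mult_less_cancel_left_pos)
    show False using \<open>z+y < 2*x\<close> \<open>z+x < 2*y\<close> b(4) pp(3) by linarith
  qed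
  have rx: "x = p+2*q+2*r" "y = 2*p+q+2*r" "z = 2*p+2*q+3*r"
    unfolding p_def q_def r_def by simp_all
  show ?thesis
  proof (cases "p > 0")
    case pos: True
    show ?thesis
    proof (cases "q > 0")
      case True
      have g: "gcd p (gcd q r) = 1"
        by (rule gcd_tr[OF pp(5), where ka=1 and kb=2 and kc="2" and kd="2" and ke="1" and kf="2"
          and kg="2" and kh="2" and ki=3]) (simp_all add: rx)
      have u: "trip p q r \<in> PPT'" using toPPT'[OF pos _ r0(1) qeven g sq] True by simp
      have "trip x y z = matB *v trip p q r" unfolding Bv trip_eq using rx by simp
      thus ?thesis using u r0 by force
    next
      case False
      have g: "gcd p (gcd (-q) r) = 1"
        by (rule gcd_tr[OF pp(5), where ka=1 and kb="-2" and kc="2" and kd="2" and ke="-1" and kf="2"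
          and kg="2" and kh="-2" and ki=3]) (simp_all add: rx)
      have u: "trip p (-q) r \<in> PPT'" using toPPT'[OF pos _ r0(1) _ g] qeven sq False by simp
      have "trip x y z = matA *v trip p (-q) r" unfolding Av trip_eq using rx by simp
      thus ?thesis using u r0 by force
    qed
  next
    case False
    hence neg: "p < 0" using p0 by simp
    hence q: "q \<ge> 0" using notboth by simp
    have g: "gcd (-p) (gcd q r) = 1"
      by (rule gcd_tr[OF pp(5), where ka="-1" and kb="2" and kc="2" and kd="-2" and ke="1" and kf="2"
        and kg="-2" and kh="2" and ki=3]) (simp_all add: rx)
    have u: "trip (-p) q r \<in> PPT'" using toPPT'[OF _ q r0(1) qeven g] neg sq by simp
    have "trip x y z = matC *v trip (-p) q r" unfolding Cv trip_eq using rx by simp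
    thus ?thesis using u r0 by force
  qed
qed

lemma descent: assumes "w \<in> PPT"
  shows "\<exists>u\<in>PPT'. u$3 < w$3 \<and> (w = matA *v u \<or> w = matB *v u \<or> w = matC *v u)"
  using descent0[of "w$1" "w$2" "w$3"] assms trip_ex[of w] by simp



lemma complete: "w \<in> PPT \<Longrightarrow> \<exists>N\<in>monG. w = (N ** matB) *v e3"
proof (induction "nat (w$3)" arbitrary: w rule: less_induct)
  case less
  obtain u where u: "u \<in> PPT'" "u$3 < w$3" and m: "w = matA *v u \<or> w = matB *v u \<or> w = matC *v u"
    using descent[OF less.prems] by blast
  show ?case
  proof (cases "u = e3")
    case True
    hence "w = matB *v e3 \<or> w = e3" using m Ae Be Ce by auto
    thus ?thesis using less.prems e3_notin monG.idG by (metis matmul_1(1))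
  next
    case False
    hence uP: "u \<in> PPT" using u PPT'_cases by blast
    have "u$3 > 0" using uP trip_ex[of u] by (metis PPT_iff)
    hence "nat (u$3) < nat (w$3)" using u by simp
    then obtain N where N: "N \<in> monG" "u = (N ** matB) *v e3" using less.hyps uP by blast
    have "\<exists>M\<in>{matA,matB,matC}. w = M *v u" using m by auto
    then obtain M where M: "M \<in> {matA,matB,matC}" "w = M *v u" by blast
    have "M \<in> monG" using M A_G B_G C_G by auto
    hence "M ** N \<in> monG" using monG_mul N by blast
    moreover have "w = ((M ** N) ** matB) *v e3" using M N by (simp add: matrix_vector_mul_assoc matrix_mul_assoc)
    ultimately show ?thesis by blast
  qed
qed

definition LOW where "LOW = {v. v \<in> PPT \<and> 2 * (v$1) < v$3}"
definition HIGH where "HIGH = {v. v \<in> PPT \<and> 2 * (v$2) < v$3}"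

lemma LOW_t: "trip x y z \<in> LOW \<longleftrightarrow> trip x y z \<in> PPT \<and> 2*x < z" unfolding LOW_def by simp
lemma HIGH_t: "trip x y z \<in> HIGH \<longleftrightarrow> trip x y z \<in> PPT \<and> 2*y < z" unfolding HIGH_def by simp

lemma lowhigh: assumes "trip x y z \<in> PPT"
  shows "2*x < z \<Longrightarrow> z < 2*y" and "2*y < z \<Longrightarrow> z < 2*x"
proof -
  have p: "x>0" "y>0" "z>0" "x*x+y*y=z*z"
    using assms by (auto simp: PPT_iff power2_eq_square)
  { assume h: "2*x < z"
    have "(2*x)*(2*x) < z*z" using h p by (intro mult_strict_mono) auto
    hence i1: "4*(x*x) < z*z" by simp
    have i2: "z*z > 0" using p by simp
    have "(2*y)^2 = 4*(y*y)" by (simp add: power2_eq_square)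
    hence "z^2 < (2*y)^2" using i1 i2 p(4) by (simp add: power2_eq_square)
    thus "z < 2*y" using sq_less[of z "2*y"] p by simp }
  { assume h: "2*y < z"
    have "(2*y)*(2*y) < z*z" using h p by (intro mult_strict_mono) auto
    hence i1: "4*(y*y) < z*z" by simp
    have i2: "z*z > 0" using p by simp
    have "(2*x)^2 = 4*(x*x)" by (simp add: power2_eq_square)
    hence "z^2 < (2*x)^2" using i1 i2 p(4) by (simp add: power2_eq_square)
    thus "z < 2*x" using sq_less[of z "2*x"] p by simp }
qed

lemma L1: "v \<in> PPT \<Longrightarrow> matA *v (matA *v v) \<in> LOW"
proof -
  assume v: "v \<in> PPT"
  have P: "matA *v (matA *v v) \<in> PPT" using v A_PPT by blast
  obtain x y z where t: "v = trip x y z" using trip_ex by blast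
  have "x > 0" "z > 0" using v t by (auto simp: PPT_iff)
  thus ?thesis using P unfolding t Av LOW_t by simp
qed

lemma L2: "v \<in> PPT' \<Longrightarrow> matA *v (matB *v v) \<in> LOW"
proof -
  assume v: "v \<in> PPT'"
  have P: "matA *v (matB *v v) \<in> PPT" using v A_PPT B_PPT' by blast
  obtain x y z where t: "v = trip x y z" using trip_ex by blast
  have "x > 0" "z > 0" using v t PPT'_bounds by auto
  thus ?thesis using P unfolding t Av Bv LOW_t by simp
qed

lemma L3: "v \<in> LOW \<Longrightarrow> matA *v v \<in> LOW"
proof -
  assume v: "v \<in> LOW"
  obtain x y z where t: "v = trip x y z" using trip_ex by blast
  have p: "trip x y z \<in> PPT" "2*x < z" using v t by (auto simp: LOW_t)
  have "z < 2*y" using lowhigh(1)[OF p] .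
  moreover have "matA *v trip x y z \<in> PPT" using A_PPT p(1) by blast
  ultimately show ?thesis using p unfolding t LOW_t Av by simp
qed

lemma L4: "v \<in> LOW \<Longrightarrow> matA *v (matC *v v) \<in> LOW"
proof -
  assume v: "v \<in> LOW"
  obtain x y z where t: "v = trip x y z" using trip_ex by blast
  have p: "trip x y z \<in> PPT" "2*x < z" using v t by (auto simp: LOW_t)
  have P: "matA *v (matC *v v) \<in> PPT" using t p A_PPT C_PPT by blast
  thus ?thesis using p unfolding t LOW_t Av Cv by simp
qed

lemma H1: "v \<in> PPT \<Longrightarrow> matC *v (matC *v v) \<in> HIGH"
proof -
  assume v: "v \<in> PPT"
  have P: "matC *v (matC *v v) \<in> PPT" using v C_PPT by blast
  obtain x y z where t: "v = trip x y z" using trip_ex by blast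
  have "y > 0" "z > 0" using v t by (auto simp: PPT_iff)
  thus ?thesis using P unfolding t Cv HIGH_t by simp
qed

lemma H2: "v \<in> PPT' \<Longrightarrow> matC *v (matB *v v) \<in> HIGH"
proof -
  assume v: "v \<in> PPT'"
  have P: "matC *v (matB *v v) \<in> PPT" using v C_PPT B_PPT' by blast
  obtain x y z where t: "v = trip x y z" using trip_ex by blast
  have "y \<ge> 0" "z > 0" using v t PPT'_bounds by auto
  thus ?thesis using P unfolding t Cv Bv HIGH_t by simp
qed

lemma H3: "v \<in> HIGH \<Longrightarrow> matC *v v \<in> HIGH"
proof -
  assume v: "v \<in> HIGH"
  obtain x y z where t: "v = trip x y z" using trip_ex by blast
  have p: "trip x y z \<in> PPT" "2*y < z" using v t by (auto simp: HIGH_t)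
  have "z < 2*x" using lowhigh(2)[OF p] .
  moreover have "matC *v trip x y z \<in> PPT" using C_PPT p(1) by blast
  ultimately show ?thesis using p unfolding t HIGH_t Cv by simp
qed

lemma H4: "v \<in> HIGH \<Longrightarrow> matC *v (matA *v v) \<in> HIGH"
proof -
  assume v: "v \<in> HIGH"
  obtain x y z where t: "v = trip x y z" using trip_ex by blast
  have p: "trip x y z \<in> PPT" "2*y < z" using v t by (auto simp: HIGH_t)
  have P: "matC *v (matA *v v) \<in> PPT" using t p A_PPT C_PPT by blast
  thus ?thesis using p unfolding t HIGH_t Av Cv by simp
qed

lemma nB: "u \<in> PPT' \<Longrightarrow> matB *v u \<notin> LOW \<and> matB *v u \<notin> HIGH"
proof -
  assume v: "u \<in> PPT'"
  obtain x y z where t: "u = trip x y z" using trip_ex by blast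
  have "x > 0" "y \<ge> 0" "z > 0" using v t PPT'_bounds by auto
  thus ?thesis unfolding t Bv LOW_t HIGH_t by simp
qed

lemma nA: "u \<in> PPT' \<Longrightarrow> matA *v u \<notin> HIGH"
proof -
  assume v: "u \<in> PPT'"
  obtain x y z where t: "u = trip x y z" using trip_ex by blast
  have "x > 0" "y \<ge> 0" "z > 0" using v t PPT'_bounds by auto
  thus ?thesis unfolding t Av HIGH_t by simp
qed

lemma nC: "u \<in> PPT' \<Longrightarrow> matC *v u \<notin> LOW"
proof -
  assume v: "u \<in> PPT'"
  obtain x y z where t: "u = trip x y z" using trip_ex by blast
  have "x > 0" "y \<ge> 0" "z > 0" using v t PPT'_bounds by auto
  thus ?thesis unfolding t Cv LOW_t by simp
qed

lemma iffAC: "u \<in> PPT \<Longrightarrow> matA *v (matC *v u) \<in> LOW \<Longrightarrow> u \<in> LOW"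
proof -
  assume v: "u \<in> PPT" and h: "matA *v (matC *v u) \<in> LOW"
  obtain x y z where t: "u = trip x y z" using trip_ex by blast
  show ?thesis using v h unfolding t Cv Av LOW_t by simp
qed

lemma iffCA: "u \<in> PPT \<Longrightarrow> matC *v (matA *v u) \<in> HIGH \<Longrightarrow> u \<in> HIGH"
proof -
  assume v: "u \<in> PPT" and h: "matC *v (matA *v u) \<in> HIGH"
  obtain x y z where t: "u = trip x y z" using trip_ex by blast
  show ?thesis using v h unfolding t Cv Av HIGH_t by simp
qed

lemma mpowA_LOW: "v \<in> LOW \<Longrightarrow> mpow matA k *v v \<in> LOW"
  by (induction k) (auto simp: L3 matrix_vector_mul_assoc[symmetric])
lemma mpowAC_LOW: "v \<in> LOW \<Longrightarrow> mpow (matA ** matC) k *v v \<in> LOW"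
  by (induction k) (auto simp: L4 matrix_vector_mul_assoc[symmetric])
lemma mpowC_HIGH: "v \<in> HIGH \<Longrightarrow> mpow matC k *v v \<in> HIGH"
  by (induction k) (auto simp: H3 matrix_vector_mul_assoc[symmetric])
lemma mpowCA_HIGH: "v \<in> HIGH \<Longrightarrow> mpow (matC ** matA) k *v v \<in> HIGH"
  by (induction k) (auto simp: H4 matrix_vector_mul_assoc[symmetric])



definition HA :: "mat3 set" where
  "HA = {M. \<exists>N \<in> monG. \<exists>k::nat. k > 0 \<and>
     (M = matA ** matA ** N ** matB \<or>
      M = mpow matA k ** matB \<or>
      M = matA ** matB ** N ** matB \<or>
      M = mpow (matA ** matC) k ** matA ** matA ** N ** matB \<or>
      M = mpow (matA ** matC) k ** matA ** matB ** N ** matB \<or>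
      M = mpow (matA ** matC) k ** matA ** matB)}"

definition HC :: "mat3 set" where
  "HC = {M. \<exists>N \<in> monG. \<exists>k::nat. k > 0 \<and>
     (M = matC ** matC ** N ** matB \<or>
      M = mpow matC k ** matB \<or>
      M = matC ** matB ** N ** matB \<or>
      M = mpow (matC ** matA) k ** matC ** matC ** N ** matB \<or>
      M = mpow (matC ** matA) k ** matC ** matB ** N ** matB \<or>
      M = mpow (matC ** matA) k ** matC ** matB)}"

lemma HA_sub: "HA \<subseteq> setH" unfolding HA_def setH_def by blast
lemma HC_sub: "HC \<subseteq> setH" unfolding HC_def setH_def by blast

lemma HA_I1: "N \<in> monG \<Longrightarrow> k > 0 \<Longrightarrow> M = matA ** matA ** N ** matB \<or>
      M = mpow matA k ** matB \<or>
      M = matA ** matB ** N ** matB \<or>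
      M = mpow (matA ** matC) k ** matA ** matA ** N ** matB \<or>
      M = mpow (matA ** matC) k ** matA ** matB ** N ** matB \<or>
      M = mpow (matA ** matC) k ** matA ** matB \<Longrightarrow> M \<in> HA"
  unfolding HA_def by blast

lemma HC_I1: "N \<in> monG \<Longrightarrow> k > 0 \<Longrightarrow> M = matC ** matC ** N ** matB \<or>
      M = mpow matC k ** matB \<or>
      M = matC ** matB ** N ** matB \<or>
      M = mpow (matC ** matA) k ** matC ** matC ** N ** matB \<or>
      M = mpow (matC ** matA) k ** matC ** matB ** N ** matB \<or>
      M = mpow (matC ** matA) k ** matC ** matB \<Longrightarrow> M \<in> HC"
  unfolding HC_def by blast

lemma mpow1: "mpow M 1 = M" by simp

lemma HA_AC: assumes "M \<in> HA" shows "matA ** matC ** M \<in> HA"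
proof -
  obtain N k where N: "N \<in> monG" "k > 0" and d: "M = matA ** matA ** N ** matB \<or>
      M = mpow matA k ** matB \<or>
      M = matA ** matB ** N ** matB \<or>
      M = mpow (matA ** matC) k ** matA ** matA ** N ** matB \<or>
      M = mpow (matA ** matC) k ** matA ** matB ** N ** matB \<or>
      M = mpow (matA ** matC) k ** matA ** matB"
    using assms unfolding HA_def by blast
  from d show ?thesis
  proof (elim disjE)
    assume "M = matA ** matA ** N ** matB"
    thus ?thesis by (intro HA_I1[OF N(1), of 1]) (simp_all add: matrix_mul_assoc)
  next
    assume M: "M = mpow matA k ** matB"
    show ?thesis
    proof (cases "k = 1")
      case True thus ?thesis using M by (intro HA_I1[OF N(1), of 1]) (simp_all add: matrix_mul_assoc)
    next
      case False
      then obtain j where "k = Suc (Suc j)" using N(2) by (metis Suc_pred' One_nat_def not0_implies_Suc)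
      thus ?thesis using M by (intro HA_I1[OF mpow_G[OF A_G, of j], of 1]) (simp_all add: matrix_mul_assoc)
    qed
  next
    assume "M = matA ** matB ** N ** matB"
    thus ?thesis by (intro HA_I1[OF N(1), of 1]) (simp_all add: matrix_mul_assoc)
  next
    assume "M = mpow (matA ** matC) k ** matA ** matA ** N ** matB"
    thus ?thesis by (intro HA_I1[OF N(1), of "Suc k"]) (simp_all add: matrix_mul_assoc)
  next
    assume "M = mpow (matA ** matC) k ** matA ** matB ** N ** matB"
    thus ?thesis by (intro HA_I1[OF N(1), of "Suc k"]) (simp_all add: matrix_mul_assoc)
  next
    assume "M = mpow (matA ** matC) k ** matA ** matB"
    thus ?thesis by (intro HA_I1[OF N(1), of "Suc k"]) (simp_all add: matrix_mul_assoc)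
  qed
qed

lemma HC_CA: assumes "M \<in> HC" shows "matC ** matA ** M \<in> HC"
proof -
  obtain N k where N: "N \<in> monG" "k > 0" and d: "M = matC ** matC ** N ** matB \<or>
      M = mpow matC k ** matB \<or>
      M = matC ** matB ** N ** matB \<or>
      M = mpow (matC ** matA) k ** matC ** matC ** N ** matB \<or>
      M = mpow (matC ** matA) k ** matC ** matB ** N ** matB \<or>
      M = mpow (matC ** matA) k ** matC ** matB"
    using assms unfolding HC_def by blast
  from d show ?thesis
  proof (elim disjE)
    assume "M = matC ** matC ** N ** matB"
    thus ?thesis by (intro HC_I1[OF N(1), of 1]) (simp_all add: matrix_mul_assoc)
  next
    assume M: "M = mpow matC k ** matB"
    show ?thesis
    proof (cases "k = 1")
      case True thus ?thesis using M by (intro HC_I1[OF N(1), of 1]) (simp_all add: matrix_mul_assoc)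
    next
      case False
      then obtain j where "k = Suc (Suc j)" using N(2) by (metis Suc_pred' One_nat_def not0_implies_Suc)
      thus ?thesis using M by (intro HC_I1[OF mpow_G[OF C_G, of j], of 1]) (simp_all add: matrix_mul_assoc)
    qed
  next
    assume "M = matC ** matB ** N ** matB"
    thus ?thesis by (intro HC_I1[OF N(1), of 1]) (simp_all add: matrix_mul_assoc)
  next
    assume "M = mpow (matC ** matA) k ** matC ** matC ** N ** matB"
    thus ?thesis by (intro HC_I1[OF N(1), of "Suc k"]) (simp_all add: matrix_mul_assoc)
  next
    assume "M = mpow (matC ** matA) k ** matC ** matB ** N ** matB"
    thus ?thesis by (intro HC_I1[OF N(1), of "Suc k"]) (simp_all add: matrix_mul_assoc)
  next
    assume "M = mpow (matC ** matA) k ** matC ** matB"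
    thus ?thesis by (intro HC_I1[OF N(1), of "Suc k"]) (simp_all add: matrix_mul_assoc)
  qed
qed



lemma PPT_z: "u \<in> PPT \<Longrightarrow> u$3 > 0" using trip_ex[of u] by (metis PPT_iff)

lemma mainb: "w \<in> PPT \<Longrightarrow> (w \<in> LOW \<longrightarrow> (\<exists>M\<in>HA. w = M *v e3)) \<and> (w \<in> HIGH \<longrightarrow> (\<exists>M\<in>HC. w = M *v e3))"
proof (induction "nat (w$3)" arbitrary: w rule: less_induct)
  case less
  obtain u where u: "u \<in> PPT'" "u$3 < w$3" and m: "w = matA *v u \<or> w = matB *v u \<or> w = matC *v u"
    using descent[OF less.prems] by blast
  have e3L: "e3 \<notin> LOW" "e3 \<notin> HIGH" "trip 3 4 5 \<notin> LOW" "trip 3 4 5 \<notin> HIGH"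
    by (simp_all add: LOW_t HIGH_t e3_notin)
  from m show ?case
  proof (elim disjE)
    assume "w = matB *v u" thus ?thesis using nB[OF u(1)] by simp
  next
    assume w: "w = matA *v u"
    have "w \<notin> HIGH" using nA[OF u(1)] w by simp
    moreover have "w \<in> LOW \<longrightarrow> (\<exists>M\<in>HA. w = M *v e3)"
    proof
      assume wL: "w \<in> LOW"
      have ue: "u \<noteq> e3" using wL w Ae e3L by auto
      hence uP: "u \<in> PPT" using u PPT'_cases by blast
      obtain u' where u': "u' \<in> PPT'" "u'$3 < u$3" and m': "u = matA *v u' \<or> u = matB *v u' \<or> u = matC *v u'"
        using descent[OF uP] by blast
      from m' show "\<exists>M\<in>HA. w = M *v e3"
      proof (elim disjE)
        assume uu: "u = matA *v u'"
        show ?thesis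
        proof (cases "u' = e3")
          case True
          have "mpow matA 1 ** matB \<in> HA" by (rule HA_I1[OF monG.idG, of 1]) simp_all
          moreover have "w = (mpow matA 1 ** matB) *v e3" using w uu True Ae Be
            by (simp add: matrix_vector_mul_assoc[symmetric])
          ultimately show ?thesis by blast
        next
          case False
          hence "u' \<in> PPT" using u' PPT'_cases by blast
          then obtain N where N: "N \<in> monG" "u' = (N ** matB) *v e3" using complete by blast
          have "matA ** matA ** N ** matB \<in> HA" by (rule HA_I1[OF N(1), of 1]) simp_all
          moreover have "w = (matA ** matA ** N ** matB) *v e3" using w uu N
            by (simp add: matrix_vector_mul_assoc matrix_mul_assoc)
          ultimately show ?thesis by blast
        qed
      next
        assume uu: "u = matB *v u'"
        show ?thesis
        proof (cases "u' = e3")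
          case True
          have "mpow matA 1 ** matB \<in> HA" by (rule HA_I1[OF monG.idG, of 1]) simp_all
          moreover have "w = (mpow matA 1 ** matB) *v e3" using w uu True
            by (simp add: matrix_vector_mul_assoc[symmetric])
          ultimately show ?thesis by blast
        next
          case False
          hence "u' \<in> PPT" using u' PPT'_cases by blast
          then obtain N where N: "N \<in> monG" "u' = (N ** matB) *v e3" using complete by blast
          have "matA ** matB ** N ** matB \<in> HA" by (rule HA_I1[OF N(1), of 1]) simp_all
          moreover have "w = (matA ** matB ** N ** matB) *v e3" using w uu N
            by (simp add: matrix_vector_mul_assoc matrix_mul_assoc)
          ultimately show ?thesis by blast
        qed
      next
        assume uu: "u = matC *v u'"
        have "u' \<noteq> e3" using uu uP Ce e3_notin by auto
        hence u'P: "u' \<in> PPT" using u' PPT'_cases by blast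
        have "u' \<in> LOW" using iffAC[OF u'P] wL w uu by simp
        moreover have "nat (u'$3) < nat (w$3)" using u u' PPT_z[OF u'P] by simp
        ultimately obtain M where M: "M \<in> HA" "u' = M *v e3" using less.hyps u'P by blast
        have "matA ** matC ** M \<in> HA" using HA_AC[OF M(1)] .
        moreover have "w = (matA ** matC ** M) *v e3" using w uu M
          by (simp add: matrix_vector_mul_assoc matrix_mul_assoc)
        ultimately show ?thesis by blast
      qed
    qed
    ultimately show ?thesis by blast
  next
    assume w: "w = matC *v u"
    have "w \<notin> LOW" using nC[OF u(1)] w by simp
    moreover have "w \<in> HIGH \<longrightarrow> (\<exists>M\<in>HC. w = M *v e3)"
    proof
      assume wL: "w \<in> HIGH"
      have ue: "u \<noteq> e3" using less.prems w Ce e3_notin by auto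
      hence uP: "u \<in> PPT" using u PPT'_cases by blast
      obtain u' where u': "u' \<in> PPT'" "u'$3 < u$3" and m': "u = matA *v u' \<or> u = matB *v u' \<or> u = matC *v u'"
        using descent[OF uP] by blast
      from m' show "\<exists>M\<in>HC. w = M *v e3"
      proof (elim disjE)
        assume uu: "u = matC *v u'"
        have "u' \<noteq> e3" using uu uP Ce e3_notin by auto
        hence "u' \<in> PPT" using u' PPT'_cases by blast
        then obtain N where N: "N \<in> monG" "u' = (N ** matB) *v e3" using complete by blast
        have "matC ** matC ** N ** matB \<in> HC" by (rule HC_I1[OF N(1), of 1]) simp_all
        moreover have "w = (matC ** matC ** N ** matB) *v e3" using w uu N
          by (simp add: matrix_vector_mul_assoc matrix_mul_assoc)
        ultimately show ?thesis by blast
      next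
        assume uu: "u = matB *v u'"
        show ?thesis
        proof (cases "u' = e3")
          case True
          have "mpow matC 1 ** matB \<in> HC" by (rule HC_I1[OF monG.idG, of 1]) simp_all
          moreover have "w = (mpow matC 1 ** matB) *v e3" using w uu True
            by (simp add: matrix_vector_mul_assoc[symmetric])
          ultimately show ?thesis by blast
        next
          case False
          hence "u' \<in> PPT" using u' PPT'_cases by blast
          then obtain N where N: "N \<in> monG" "u' = (N ** matB) *v e3" using complete by blast
          have "matC ** matB ** N ** matB \<in> HC" by (rule HC_I1[OF N(1), of 1]) simp_all
          moreover have "w = (matC ** matB ** N ** matB) *v e3" using w uu N
            by (simp add: matrix_vector_mul_assoc matrix_mul_assoc)
          ultimately show ?thesis by blast
        qed
      next
        assume uu: "u = matA *v u'"
        show ?thesis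
        proof (cases "u' = e3")
          case True
          have "mpow matC 1 ** matB \<in> HC" by (rule HC_I1[OF monG.idG, of 1]) simp_all
          moreover have "w = (mpow matC 1 ** matB) *v e3" using w uu True Ae Be
            by (simp add: matrix_vector_mul_assoc[symmetric])
          ultimately show ?thesis by blast
        next
          case False
          hence u'P: "u' \<in> PPT" using u' PPT'_cases by blast
          have "u' \<in> HIGH" using iffCA[OF u'P] wL w uu by simp
          moreover have "nat (u'$3) < nat (w$3)" using u u' PPT_z[OF u'P] by simp
          ultimately obtain M where M: "M \<in> HC" "u' = M *v e3" using less.hyps u'P by blast
          have "matC ** matA ** M \<in> HC" using HC_CA[OF M(1)] .
          moreover have "w = (matC ** matA ** M) *v e3" using w uu M
            by (simp add: matrix_vector_mul_assoc matrix_mul_assoc)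
          ultimately show ?thesis by blast
        qed
      qed
    qed
    ultimately show ?thesis by blast
  qed
qed



lemma parta: assumes M: "M \<in> setH" and v: "v \<in> PPT'" shows "M *v v \<in> LOW \<union> HIGH"
proof -
  obtain N k where N: "N \<in> monG" "k > 0" and d: "M = matA ** matA ** N ** matB \<or>
      M = mpow matA k ** matB \<or>
      M = matA ** matB ** N ** matB \<or>
      M = matC ** matC ** N ** matB \<or>
      M = mpow matC k ** matB \<or>
      M = matC ** matB ** N ** matB \<or>
      M = mpow (matA ** matC) k ** matA ** matA ** N ** matB \<or>
      M = mpow (matA ** matC) k ** matA ** matB ** N ** matB \<or>
      M = mpow (matA ** matC) k ** matA ** matB \<or>
      M = mpow (matC ** matA) k ** matC ** matC ** N ** matB \<or>
      M = mpow (matC ** matA) k ** matC ** matB ** N ** matB \<or>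
      M = mpow (matC ** matA) k ** matC ** matB"
    using M unfolding setH_def by blast
  obtain j where kj: "k = Suc j" using N(2) gr0_implies_Suc by blast
  have u: "matB *v v \<in> PPT" using B_PPT' v .
  have n: "N *v (matB *v v) \<in> PPT" using monG_PPT[OF N(1) u] .
  hence n': "N *v (matB *v v) \<in> PPT'" using PPT_sub by blast
  note sa = matrix_vector_mul_assoc[symmetric]
  from d show ?thesis
  proof (elim disjE)
    assume "M = matA ** matA ** N ** matB" thus ?thesis using L1[OF n] by (simp add: sa)
  next
    assume "M = mpow matA k ** matB" thus ?thesis using mpowA_LOW[OF L2[OF v], of j] kj
      by (simp add: sa mpow_Suc' del: mpow.simps)
  next
    assume "M = matA ** matB ** N ** matB" thus ?thesis using L2[OF n'] by (simp add: sa)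
  next
    assume "M = matC ** matC ** N ** matB" thus ?thesis using H1[OF n] by (simp add: sa)
  next
    assume "M = mpow matC k ** matB" thus ?thesis using mpowC_HIGH[OF H2[OF v], of j] kj
      by (simp add: sa mpow_Suc' del: mpow.simps)
  next
    assume "M = matC ** matB ** N ** matB" thus ?thesis using H2[OF n'] by (simp add: sa)
  next
    assume "M = mpow (matA ** matC) k ** matA ** matA ** N ** matB"
    thus ?thesis using mpowAC_LOW[OF L1[OF n], of k] by (simp add: sa del: mpow.simps)
  next
    assume "M = mpow (matA ** matC) k ** matA ** matB ** N ** matB"
    thus ?thesis using mpowAC_LOW[OF L2[OF n'], of k] by (simp add: sa del: mpow.simps)
  next
    assume "M = mpow (matA ** matC) k ** matA ** matB"
    thus ?thesis using mpowAC_LOW[OF L2[OF v], of k] by (simp add: sa del: mpow.simps)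
  next
    assume "M = mpow (matC ** matA) k ** matC ** matC ** N ** matB"
    thus ?thesis using mpowCA_HIGH[OF H1[OF n], of k] by (simp add: sa del: mpow.simps)
  next
    assume "M = mpow (matC ** matA) k ** matC ** matB ** N ** matB"
    thus ?thesis using mpowCA_HIGH[OF H2[OF n'], of k] by (simp add: sa del: mpow.simps)
  next
    assume "M = mpow (matC ** matA) k ** matC ** matB"
    thus ?thesis using mpowCA_HIGH[OF H2[OF v], of k] by (simp add: sa del: mpow.simps)
  qed
qed

lemma small_iff: "w \<in> PPTsmall \<longleftrightarrow> (w \<in> PPT \<and> 2 * min (w$1) (w$2) < w$3) \<or> w = e3"
  unfolding PPTsmall_def using trip_ex[of w] by auto

lemma LH_small: "LOW \<union> HIGH \<subseteq> PPTsmall - {e3}"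
proof
  fix w assume w: "w \<in> LOW \<union> HIGH"
  hence "w \<in> PPT" unfolding LOW_def HIGH_def by auto
  moreover have "2 * min (w$1) (w$2) < w$3" using w unfolding LOW_def HIGH_def by auto
  moreover have "w \<noteq> e3" using \<open>w \<in> PPT\<close> e3_notin by blast
  ultimately show "w \<in> PPTsmall - {e3}" by (simp add: small_iff)
qed

lemma small_sub: "PPTsmall \<subseteq> PPT'" proof
  fix w assume "w \<in> PPTsmall"
  hence "(w \<in> PPT \<and> 2 * min (w$1) (w$2) < w$3) \<or> w = e3" by (simp only: small_iff)
  thus "w \<in> PPT'"
  proof (elim disjE)
    assume "w \<in> PPT \<and> 2 * min (w$1) (w$2) < w$3" thus ?thesis using PPT_sub by blast
  next
    assume "w = e3" thus ?thesis using e_PPT' by (rule ssubst)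
  qed
qed

theorem lemma2p1:
  shows "act_set setH PPT' = act_set setH PPTsmall \<and>
         act_set setH PPTsmall = PPTsmall - {trip 1 0 1}"
proof -
  have S1: "act_set setH PPT' \<subseteq> PPTsmall - {e3}"
  proof
    fix w assume "w \<in> act_set setH PPT'"
    then obtain M v where mv: "w = M *v v" "M \<in> setH" "v \<in> PPT'" unfolding act_set_def by blast
    have "w \<in> LOW \<union> HIGH" using parta[OF mv(2,3)] mv(1) by simp
    thus "w \<in> PPTsmall - {e3}" using LH_small by (rule subsetD[rotated])
  qed
  have S2: "PPTsmall - {e3} \<subseteq> act_set setH PPTsmall"
  proof
    fix w assume w: "w \<in> PPTsmall - {e3}"
    hence h1: "(w \<in> PPT \<and> 2 * min (w$1) (w$2) < w$3) \<or> w = e3" and h2: "w \<noteq> e3"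
      by (simp_all only: small_iff Diff_iff singleton_iff) blast+
    hence wP: "w \<in> PPT" and "2 * min (w$1) (w$2) < w$3" by blast+
    hence "2 * (w$1) < w$3 \<or> 2 * (w$2) < w$3" by (simp add: min_def split: if_splits)
    hence "w \<in> LOW \<or> w \<in> HIGH" using wP unfolding LOW_def HIGH_def by blast
    then obtain M where "M \<in> HA \<union> HC" "w = M *v e3" using mainb[OF wP] by blast
    hence "M \<in> setH" "w = M *v e3" using HA_sub HC_sub by blast+
    moreover have "e3 \<in> PPTsmall" unfolding small_iff by simp
    ultimately show "w \<in> act_set setH PPTsmall" unfolding act_set_def by blast
  qed
  have S3: "act_set setH PPTsmall \<subseteq> act_set setH PPT'"
  proof
    fix w assume "w \<in> act_set setH PPTsmall"
    then obtain M v where mv: "w = M *v v" "M \<in> setH" "v \<in> PPTsmall" unfolding act_set_def by blast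
    have "v \<in> PPT'" using small_sub mv(3) by (rule subsetD)
    thus "w \<in> act_set setH PPT'" unfolding act_set_def using mv(1,2) by blast
  qed
  have "act_set setH PPT' = PPTsmall - {e3}" using S1 S2 S3 by (rule_tac equalityI) blast+
  moreover have "act_set setH PPTsmall = PPTsmall - {e3}" using S1 S2 S3 by (rule_tac equalityI) blast+
  ultimately show ?thesis by simp
qed


end
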